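(* Let $d,n\ge 1$, let $\kappa\ge1$ divide $d$, and set $d'=d/\kappa$. Let $A_1,\dots,A_{d'}\in\mathbb{R}^{m\times n^\kappa}$ and $\mathcal{A}(\mathcal{Y})=\mathcal{Y}\times_1A_1\times_2\cdots\times_{d'}A_{d'}$. Suppose each $A_i$ has the RIP$(\varepsilon,\mathcal{S}_{1,2})$ property. Let $\delta=\max\{(1+\varepsilon)^d-1,\,1-(1-\varepsilon)^d\}$ and assume $\delta<1$. Then for all $\mathcal{X}\in\mathbb{R}^{n\times\cdots\times n}$ ($d$ modes) with HOSVD rank $(1,\dots,1)$, $$(1-\delta)\|\mathcal{X}\|^2\le\|\mathcal{A}(\mathcal{R}(\mathcal{X}))\|^2\le(1+\delta)\|\mathcal{X}\|^2.$$
   Context: $\|\cdot\|$ is the Frobenius norm. The $j$-mode product of $\mathcal{X}\in\mathbb{R}^{p_1\times\cdots\times p_D}$ with $U\in\mathbb{R}^{q\times p_j}$ has entries $(\mathcal{X}\times_jU)_{i_1,\dots,\ell,\dots,i_D}=\sum_{i_j}\mathcal{X}_{i_1,\dots,i_j,\dots,i_D}U_{\ell,i_j}$. HOSVD rank $(1,\dots,1)$ means $\mathcal{X}=c\,\mathbf{u}^1\circ\cdots\circ\mathbf{u}^d$ (nonzero rank-one). The reshaping operator $\mathcal{R}$ is the linear map with $\mathcal{R}(\mathbf{x}^1\circ\cdots\circ\mathbf{x}^d)=\bigcirc_{i=1}^{d'}(\mathbf{x}^{\kappa(i-1)+1}\otimes\cdots\otimes\mathbf{x}^{\kappa i})$ ($\circ$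 outer product, $\otimes$ Kronecker product). $\mathcal{S}_1=\{\mathbf{u}^1\otimes\cdots\otimes\mathbf{u}^\kappa:\mathbf{u}^i\in\mathbb{S}^{n-1}\}$, $\mathcal{S}_2=\{(\mathbf{x}+\mathbf{y})/\|\mathbf{x}+\mathbf{y}\|_2:\mathbf{x},\mathbf{y}\in\mathcal{S}_1,\langle\mathbf{x},\mathbf{y}\rangle=0\}$, $\mathcal{S}_{1,2}=\mathcal{S}_1\cup\mathcal{S}_2$. A linear map $L$ has RIP$(\varepsilon,\mathcal{S})$ if $(1-\varepsilon)\|s\|^2\le\|Ls\|^2\le(1+\varepsilon)\|s\|^2$ for all $s\in\mathcal{S}$. *)

theory Defs
  imports Complex_Main
begin

text \<open>Tensors of order D with mode sizes dims = [p_1,...,p_D] are represented as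
  functions from index lists (0-based) to reals; only the values on tidx dims matter.\<close>

definition tidx :: "nat list \<Rightarrow> nat list set" where
  "tidx dims = {is. length is = length dims \<and> (\<forall>j<length dims. is ! j < dims ! j)}"

definition fnorm2 :: "nat list \<Rightarrow> (nat list \<Rightarrow> real) \<Rightarrow> real" where
  "fnorm2 dims X = (\<Sum>is\<in>tidx dims. (X is)^2)"

definition mode_prod :: "nat \<Rightarrow> nat \<Rightarrow> (nat list \<Rightarrow> real) \<Rightarrow> (nat \<Rightarrow> nat \<Rightarrow> real)
    \<Rightarrow> (nat list \<Rightarrow> real)" where
  "mode_prod j p X U = (\<lambda>is. \<Sum>i<p. X (is[j := i]) * U (is ! j) i)"

definition outer :: "(nat \<Rightarrow> real) list \<Rightarrow> (nat list \<Rightarrow> real)" where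
  "outer us = (\<lambda>is. \<Prod>j<length us. (us ! j) (is ! j))"

text \<open>HOSVD rank (1,...,1): nonzero rank-one tensor.\<close>
definition hosvd_rank_one :: "nat list \<Rightarrow> (nat list \<Rightarrow> real) \<Rightarrow> bool" where
  "hosvd_rank_one dims X \<longleftrightarrow>
     (\<exists>c us. length us = length dims \<and> (\<forall>is\<in>tidx dims. X is = c * outer us is))
     \<and> (\<exists>is\<in>tidx dims. X is \<noteq> 0)"

text \<open>Kronecker product of vectors of length n (standard ordering,
  (x \<otimes> y)_(i*n+j) = x_i y_j, 0-based).\<close>
fun kron :: "nat \<Rightarrow> (nat \<Rightarrow> real) list \<Rightarrow> nat \<Rightarrow> real" where
  "kron n [] = (\<lambda>k. 1)"
| "kron n (u # us) = (\<lambda>k. u (k div n ^ length us) * kron n us (k mod n ^ length us))"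

text \<open>Vectors in R^N: functions nat => real, only indices < N matter.\<close>
definition vnorm2 :: "nat \<Rightarrow> (nat \<Rightarrow> real) \<Rightarrow> real" where
  "vnorm2 N x = (\<Sum>k<N. (x k)^2)"

definition vinner :: "nat \<Rightarrow> (nat \<Rightarrow> real) \<Rightarrow> (nat \<Rightarrow> real) \<Rightarrow> real" where
  "vinner N x y = (\<Sum>k<N. x k * y k)"

definition matvec :: "nat \<Rightarrow> (nat \<Rightarrow> nat \<Rightarrow> real) \<Rightarrow> (nat \<Rightarrow> real) \<Rightarrow> (nat \<Rightarrow> real)" where
  "matvec N A x = (\<lambda>l. \<Sum>k<N. A l k * x k)"

definition S1 :: "nat \<Rightarrow> nat \<Rightarrow> (nat \<Rightarrow> real) set" where
  "S1 n \<kappa> = {kron n us | us. length us = \<kappa> \<and> (\<forall>u\<in>set us. vnorm2 n u = 1)}"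

definition S2 :: "nat \<Rightarrow> nat \<Rightarrow> (nat \<Rightarrow> real) set" where
  "S2 n \<kappa> = {(\<lambda>k. (x k + y k) / sqrt (vnorm2 (n ^ \<kappa>) (\<lambda>k. x k + y k))) | x y.
      x \<in> S1 n \<kappa> \<and> y \<in> S1 n \<kappa> \<and> vinner (n ^ \<kappa>) x y = 0}"

definition S12 :: "nat \<Rightarrow> nat \<Rightarrow> (nat \<Rightarrow> real) set" where
  "S12 n \<kappa> = S1 n \<kappa> \<union> S2 n \<kappa>"

definition RIP :: "nat \<Rightarrow> nat \<Rightarrow> (nat \<Rightarrow> nat \<Rightarrow> real) \<Rightarrow> real \<Rightarrow> (nat \<Rightarrow> real) set \<Rightarrow> bool" where
  "RIP m N A \<epsilon> S \<longleftrightarrow> (\<forall>s\<in>S. (1 - \<epsilon>) * vnorm2 N s \<le> vnorm2 m (matvec N A s)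
                                \<and> vnorm2 m (matvec N A s) \<le> (1 + \<epsilon>) * vnorm2 N s)"

text \<open>Reshaping operator: order-d tensor (n x ... x n) to order d/kappa tensor
  (n^kappa x ... x n^kappa); index k_l of the result encodes the kappa indices
  of group l as base-n digits (most significant first), matching kron.\<close>
definition digits :: "nat \<Rightarrow> nat \<Rightarrow> nat \<Rightarrow> nat list" where
  "digits n \<kappa> k = map (\<lambda>t. (k div n ^ (\<kappa> - 1 - t)) mod n) [0..<\<kappa>]"

definition reshape :: "nat \<Rightarrow> nat \<Rightarrow> (nat list \<Rightarrow> real) \<Rightarrow> (nat list \<Rightarrow> real)" where
  "reshape n \<kappa> X = (\<lambda>ks. X (concat (map (digits n \<kappa>) ks)))"

text \<open>Multilinear operator Y x_1 A_1 x_2 ... x_{d'} A_{d'} (A indexed 0..d'-1),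
  each mode of Y of size N.\<close>
definition multi_op :: "nat \<Rightarrow> nat \<Rightarrow> (nat \<Rightarrow> nat \<Rightarrow> nat \<Rightarrow> real) \<Rightarrow> (nat list \<Rightarrow> real)
    \<Rightarrow> (nat list \<Rightarrow> real)" where
  "multi_op d' N A Y = foldl (\<lambda>Z j. mode_prod j N Z (A j)) Y [0..<d']"

end

theory Submission
  imports Defs
begin

lemma prod_list_nth: "prod_list (map f xs) = (\<Prod>i<length xs. f (xs ! i))"
  by (induction xs) (simp_all add: prod.lessThan_Suc_shift del: prod.lessThan_Suc)

definition ev :: "(nat \<Rightarrow> real) list \<Rightarrow> nat list \<Rightarrow> real" where
  "ev us js = prod_list (map (\<lambda>(u,i). u i) (zip us js))"

lemma ev_prod: "length js = length us \<Longrightarrow> ev us js = (\<Prod>j<length us. (us!j) (js!j))"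
  unfolding ev_def prod_list_nth by simp

lemma ev_append: "length a = length c \<Longrightarrow> ev (a @ b) (c @ e) = ev a c * ev b e"
  unfolding ev_def by simp

lemma ev_concat: "length gs = length ks \<Longrightarrow> \<forall>g\<in>set gs. length g = \<kappa> \<Longrightarrow>
   ev (concat gs) (concat (map (digits n \<kappa>) ks)) = prod_list (map (\<lambda>(g,k). ev g (digits n \<kappa> k)) (zip gs ks))"
proof (induction gs arbitrary: ks)
  case Nil
  then show ?case by (simp add: ev_def)
next
  case (Cons g gs)
  then obtain k ks' where ks: "ks = k # ks'" by (cases ks) auto
  have "length g = length (digits n \<kappa> k)" using Cons.prems by (simp add: digits_def)
  then show ?case using Cons ks by (simp add: ev_append)
qed

lemma digits_Suc: "digits n (Suc L) k = (k div n ^ L) mod n # digits n L k"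
  unfolding digits_def by (rule nth_equalityI) (auto simp del: upt_Suc simp: nth_Cons split: nat.split)

lemma digits_mod: assumes "n \<ge> 1" shows "digits n L (k mod n ^ L) = digits n L k"
proof (rule nth_equalityI)
  show "length (digits n L (k mod n ^ L)) = length (digits n L k)" by (simp add: digits_def)
  fix t assume "t < length (digits n L (k mod n ^ L))"
  then have t: "t < L" by (simp add: digits_def)
  define b where "b = L - 1 - t"
  have "L = b + Suc t" using t by (simp add: b_def)
  then have L: "n ^ L = n ^ b * n ^ (Suc t)" by (metis power_add)
  have "(k mod n ^ L) div n ^ b mod n = k div n ^ b mod n"
  proof -
    have "k mod n ^ L = n ^ b * (k div n ^ b mod n ^ Suc t) + k mod n ^ b"
      unfolding L by (rule mod_mult2_eq)
    moreover have "k mod n ^ b < n ^ b" using assms by simp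
    ultimately have "(k mod n ^ L) div n ^ b = k div n ^ b mod n ^ Suc t"
      using assms by simp
    then show ?thesis by (simp add: mod_mod_cancel)
  qed
  then show "digits n L (k mod n ^ L) ! t = digits n L k ! t"
    using t by (simp add: digits_def b_def)
qed

lemma kron_ev: "n \<ge> 1 \<Longrightarrow> k < n ^ length us \<Longrightarrow> kron n us k = ev us (digits n (length us) k)"
proof (induction us arbitrary: k)
  case Nil
  then show ?case by (simp add: ev_def digits_def)
next
  case (Cons u us)
  have "k div n ^ length us < n" using Cons.prems
    by (simp add: less_mult_imp_div_less mult.commute)
  moreover have "k mod n ^ length us < n ^ length us" using Cons.prems by simp
  ultimately show ?case using Cons by (simp add: digits_Suc digits_mod ev_def)
qed


lemma tidx_Nil: "tidx [] = {[]}" by (auto simp: tidx_def)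

lemma tidx_Cons: "tidx (p # dims) = (\<lambda>(k,js). k # js) ` ({..<p} \<times> tidx dims)"
proof (intro set_eqI iffI)
  fix xs assume xs: "xs \<in> tidx (p # dims)"
  then obtain k js where xs': "xs = k # js" unfolding tidx_def by (cases xs) auto
  have "k < p" using xs unfolding xs' tidx_def by force
  moreover have "js \<in> tidx dims"
    unfolding tidx_def
  proof (intro CollectI conjI allI impI)
    show "length js = length dims" using xs unfolding xs' tidx_def by simp
    fix j assume "j < length dims"
    then have "Suc j < length (p # dims)" by simp
    then have "xs ! Suc j < (p # dims) ! Suc j" using xs unfolding tidx_def by blast
    then show "js ! j < dims ! j" unfolding xs' by simp
  qed
  ultimately show "xs \<in> (\<lambda>(k,js). k # js) ` ({..<p} \<times> tidx dims)"
    unfolding xs' by auto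
next
  fix xs assume "xs \<in> (\<lambda>(k,js). k # js) ` ({..<p} \<times> tidx dims)"
  then show "xs \<in> tidx (p # dims)"
    by (auto simp: tidx_def nth_Cons split: nat.split)
qed

lemma sum_tidx_prod:
  "(\<Sum>js\<in>tidx dims. \<Prod>i<length dims. g i (js!i)) = (\<Prod>i<length dims. \<Sum>k<dims!i. (g i k :: real))"
proof (induction dims arbitrary: g)
  case Nil
  then show ?case by (simp add: tidx_Nil)
next
  case (Cons p dims)
  have inj: "inj_on (\<lambda>(k,js). k # (js :: nat list)) ({..<p} \<times> tidx dims)"
    by (auto simp: inj_on_def)
  have "(\<Sum>js\<in>tidx (p # dims). \<Prod>i<length (p # dims). g i (js!i))
      = (\<Sum>(k,js)\<in>{..<p} \<times> tidx dims. g 0 k * (\<Prod>i<length dims. g (Suc i) (js!i)))"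
    unfolding tidx_Cons sum.reindex[OF inj]
    by (rule sum.cong) (auto simp add: prod.lessThan_Suc_shift simp del: prod.lessThan_Suc)
  also have "\<dots> = (\<Sum>k<p. g 0 k * (\<Sum>js\<in>tidx dims. \<Prod>i<length dims. g (Suc i) (js!i)))"
    by (simp add: sum.cartesian_product[symmetric] sum_distrib_left)
  also have "\<dots> = (\<Sum>k<p. g 0 k) * (\<Prod>i<length dims. \<Sum>k<dims!i. g (Suc i) k)"
    by (simp add: Cons.IH[of "\<lambda>i. g (Suc i)"] sum_distrib_right)
  also have "\<dots> = (\<Prod>i<length (p # dims). \<Sum>k<(p # dims)!i. g i k)"
    by (simp add: prod.lessThan_Suc_shift del: prod.lessThan_Suc)
  finally show ?case .
qed

lemma sum_lessThan_mult: fixes a M :: nat shows "(\<Sum>k<a * M. f k) = (\<Sum>x<a. \<Sum>y<M. (f (x * M + y) :: real))"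
proof -
  have "(\<Sum>k<a * M. f k) = (\<Sum>x<a. \<Sum>k\<in>{x * M..<x * M + M}. f k)"
    using sum.nat_group[of f M a] by simp
  also have "\<dots> = (\<Sum>x<a. \<Sum>y<M. f (x * M + y))"
  proof (rule sum.cong[OF refl])
    fix x
    show "(\<Sum>k\<in>{x * M..<x * M + M}. f k) = (\<Sum>y<M. f (x * M + y))"
      using sum.shift_bounds_nat_ivl[of f 0 "x * M" M]
      by (simp add: atLeast0LessThan add.commute)
  qed
  finally show ?thesis .
qed

lemma vnorm2_kron: "n \<ge> 1 \<Longrightarrow> \<forall>u\<in>set us. vnorm2 n u = 1 \<Longrightarrow> vnorm2 (n ^ length us) (kron n us) = 1"
proof (induction us)
  case Nil
  then show ?case by (simp add: vnorm2_def)
next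
  case (Cons u us)
  let ?M = "n ^ length us"
  have pos: "?M > 0" using Cons.prems by simp
  have "vnorm2 (n ^ length (u # us)) (kron n (u # us))
      = (\<Sum>x<n. \<Sum>y<?M. (u x)^2 * (kron n us y)^2)"
    unfolding vnorm2_def using pos
    by (simp add: sum_lessThan_mult power_mult_distrib)
  also have "\<dots> = vnorm2 n u * vnorm2 ?M (kron n us)"
    by (simp add: vnorm2_def sum_product)
  finally show ?case using Cons by simp
qed


lemma multi_op_gen:
  assumes Y: "\<forall>ks. length ks = D \<and> (\<forall>i<D. ks!i < N) \<longrightarrow> Y ks = c * (\<Prod>i<D. y i (ks!i))"
  shows "k \<le> D \<Longrightarrow> \<forall>js. length js = D \<and> (\<forall>i. k \<le> i \<and> i < D \<longrightarrow> js!i < N) \<longrightarrow>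
     foldl (\<lambda>Z j. mode_prod j N Z (A j)) Y [0..<k] js
       = c * (\<Prod>i<D. (if i < k then matvec N (A i) (y i) else y i) (js!i))"
proof (induction k)
  case 0
  then show ?case using Y by simp
next
  case (Suc k)
  show ?case
  proof (intro allI impI)
    fix js assume js: "length js = D \<and> (\<forall>i. Suc k \<le> i \<and> i < D \<longrightarrow> js!i < N)"
    let ?Z = "foldl (\<lambda>Z j. mode_prod j N Z (A j)) Y [0..<k]"
    let ?h = "\<lambda>i. (if i < k then matvec N (A i) (y i) else y i)"
    let ?h' = "\<lambda>i. (if i < Suc k then matvec N (A i) (y i) else y i)"
    have kD: "k < D" using Suc.prems by simp
    define P where "P = (\<Prod>i\<in>{..<D} - {k}. ?h i (js!i))"
    have P': "P = (\<Prod>i\<in>{..<D} - {k}. ?h' i (js!i))"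
      unfolding P_def by (rule prod.cong) auto
    have Zl: "?Z (js[k := l]) = c * y k l * P" if "l < N" for l
    proof -
      have "?Z (js[k := l]) = c * (\<Prod>i<D. ?h i ((js[k := l])!i))"
        using Suc.IH kD js that by (auto simp: nth_list_update)
      also have "\<dots> = c * (?h k ((js[k := l])!k) * (\<Prod>i\<in>{..<D} - {k}. ?h i ((js[k := l])!i)))"
        using kD by (simp add: prod.remove)
      also have "\<dots> = c * y k l * P"
        unfolding P_def using kD js by (simp add: nth_list_update)
      finally show ?thesis .
    qed
    have "foldl (\<lambda>Z j. mode_prod j N Z (A j)) Y [0..<Suc k] js
        = (\<Sum>l<N. ?Z (js[k := l]) * A k (js!k) l)"
      by (simp add: mode_prod_def)
    also have "\<dots> = (\<Sum>l<N. c * P * (A k (js!k) l * y k l))"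
      by (rule sum.cong) (auto simp: Zl)
    also have "\<dots> = c * P * matvec N (A k) (y k) (js!k)"
      by (simp add: matvec_def sum_distrib_left)
    also have "\<dots> = c * (?h' k (js!k) * (\<Prod>i\<in>{..<D} - {k}. ?h' i (js!i)))"
      using P' by simp
    also have "\<dots> = c * (\<Prod>i<D. ?h' i (js!i))"
      using kD by (simp add: prod.remove)
    finally show "foldl (\<lambda>Z j. mode_prod j N Z (A j)) Y [0..<Suc k] js
       = c * (\<Prod>i<D. ?h' i (js!i))" .
  qed
qed

lemma multi_op_sep:
  assumes "\<forall>ks. length ks = D \<and> (\<forall>i<D. ks!i < N) \<longrightarrow> Y ks = c * (\<Prod>i<D. y i (ks!i))"
    and "length js = D"
  shows "multi_op D N A Y js = c * (\<Prod>i<D. matvec N (A i) (y i) (js!i))"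
  using multi_op_gen[OF assms(1), of D A] assms(2) unfolding multi_op_def by simp

lemma groups: "length us = \<kappa> * d' \<Longrightarrow> \<exists>gs. length gs = d' \<and> (\<forall>g\<in>set gs. length g = \<kappa>) \<and> concat gs = us"
proof (induction d' arbitrary: us)
  case 0 then show ?case by simp
next
  case (Suc d')
  then obtain gs where "length gs = d'" "\<forall>g\<in>set gs. length g = \<kappa>" "concat gs = drop \<kappa> us"
    by (metis diff_add_inverse length_drop mult_Suc_right)
  then show ?case using Suc.prems
    by (intro exI[of _ "take \<kappa> us # gs"]) auto
qed


lemma normalize:
  assumes "hosvd_rank_one (replicate d n) X"
  shows "\<exists>c vs. length vs = d \<and> (\<forall>v\<in>set vs. vnorm2 n v = 1) \<and>
           (\<forall>js\<in>tidx (replicate d n). X js = c * (\<Prod>j<d. (vs!j) (js!j)))"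
proof -
  obtain c us where us: "length us = d" "\<forall>js\<in>tidx (replicate d n). X js = c * outer us js"
    and "\<exists>js\<in>tidx (replicate d n). X js \<noteq> 0"
    using assms unfolding hosvd_rank_one_def length_replicate by blast
  then obtain j0 where j0: "j0 \<in> tidx (replicate d n)" "X j0 \<noteq> 0" by auto
  define r where "r j = sqrt (vnorm2 n (us!j))" for j
  have rpos: "r j > 0" if "j < d" for j
  proof -
    have "(us!j) (j0!j) \<noteq> 0"
      using j0 us that by (auto simp: outer_def)
    moreover have "j0!j < n" using j0 that by (auto simp: tidx_def)
    ultimately have "vnorm2 n (us!j) > 0"
      unfolding vnorm2_def by (intro sum_pos2[of _ "j0!j"]) auto
    then show ?thesis by (simp add: r_def)
  qed
  define vs where "vs = map (\<lambda>j. \<lambda>k. (us!j) k / r j) [0..<d]"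
  have lv: "length vs = d" by (simp add: vs_def)
  have unit: "\<forall>v\<in>set vs. vnorm2 n v = 1"
  proof
    fix v assume "v \<in> set vs"
    then obtain j where j: "j < d" "v = (\<lambda>k. (us!j) k / r j)" by (auto simp: vs_def)
    have "vnorm2 n v = vnorm2 n (us!j) / (r j)^2"
      unfolding vnorm2_def j by (simp add: power_divide sum_divide_distrib)
    also have "\<dots> = 1" using rpos[OF j(1)] unfolding r_def
      by (simp add: vnorm2_def sum_nonneg)
    finally show "vnorm2 n v = 1" .
  qed
  have "X js = (c * (\<Prod>j<d. r j)) * (\<Prod>j<d. (vs!j) (js!j))" if "js \<in> tidx (replicate d n)" for js
  proof -
    have "outer us js = (\<Prod>j<d. r j * (vs!j) (js!j))"
      unfolding outer_def us(1) by (rule prod.cong) (auto simp: vs_def dest: rpos)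
    then show ?thesis using us that by (simp add: prod.distrib)
  qed
  then show ?thesis using lv unit by blast
qed


lemma len_concat_digits: "length (concat (map (digits n \<kappa>) ks)) = \<kappa> * length ks"
  by (induction ks) (auto simp: digits_def)

theorem proposition1:
  fixes d n \<kappa> d' m :: nat and \<epsilon> \<delta> :: real
    and A :: "nat \<Rightarrow> nat \<Rightarrow> nat \<Rightarrow> real"
    and X :: "nat list \<Rightarrow> real"
  assumes "d \<ge> 1" and "n \<ge> 1" and "\<kappa> \<ge> 1" and "\<kappa> dvd d" and "d' = d div \<kappa>"
    and "\<forall>i<d'. RIP m (n ^ \<kappa>) (A i) \<epsilon> (S12 n \<kappa>)"
    and "\<delta> = max ((1 + \<epsilon>) ^ d - 1) (1 - (1 - \<epsilon>) ^ d)"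
    and "\<delta> < 1"
    and "hosvd_rank_one (replicate d n) X"
  shows "(1 - \<delta>) * fnorm2 (replicate d n) X
           \<le> fnorm2 (replicate d' m) (multi_op d' (n ^ \<kappa>) A (reshape n \<kappa> X))
         \<and> fnorm2 (replicate d' m) (multi_op d' (n ^ \<kappa>) A (reshape n \<kappa> X))
           \<le> (1 + \<delta>) * fnorm2 (replicate d n) X"
proof -
  define N where "N = n ^ \<kappa>"
  have hd: "d = \<kappa> * d'" using assms(4,5) by simp
  have d'1: "d' \<ge> 1" using hd assms(1) by (cases d') auto
  have d'd: "d' \<le> d" using hd assms(3) by simp
  obtain c vs where lv: "length vs = d" and vunit: "\<forall>v\<in>set vs. vnorm2 n v = 1"
    and Xeq: "\<forall>js\<in>tidx (replicate d n). X js = c * (\<Prod>j<d. (vs!j) (js!j))"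
    using normalize[OF assms(9)] by blast
  obtain gs where lgs: "length gs = d'" and lg: "\<forall>g\<in>set gs. length g = \<kappa>" and cg: "concat gs = vs"
    using groups[of vs \<kappa> d'] lv hd by blast
  define y where "y i = kron n (gs!i)" for i
  have gunit: "\<forall>u\<in>set (gs!i). vnorm2 n u = 1" if "i < d'" for i
    using vunit cg that lgs by (auto dest!: nth_mem)
  have lgi: "length (gs!i) = \<kappa>" if "i < d'" for i using lg lgs that by auto
  have yS1: "y i \<in> S1 n \<kappa>" if "i < d'" for i
    unfolding S1_def y_def using gunit[OF that] lgi[OF that] by blast
  have ynorm: "vnorm2 N (y i) = 1" if "i < d'" for i
    using vnorm2_kron[OF assms(2) gunit[OF that]] lgi[OF that] by (simp add: y_def N_def)
  define M where "M i = matvec N (A i) (y i)" for i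
  have RIPy: "1 - \<epsilon> \<le> vnorm2 m (M i) \<and> vnorm2 m (M i) \<le> 1 + \<epsilon>" if "i < d'" for i
  proof -
    have "y i \<in> S12 n \<kappa>" using yS1[OF that] by (simp add: S12_def)
    then show ?thesis using assms(6) that ynorm[OF that]
      unfolding RIP_def M_def N_def by fastforce
  qed
  have resh: "\<forall>ks. length ks = d' \<and> (\<forall>i<d'. ks!i < N) \<longrightarrow>
      reshape n \<kappa> X ks = c * (\<Prod>i<d'. y i (ks!i))"
  proof (intro allI impI)
    fix ks assume ks: "length ks = d' \<and> (\<forall>i<d'. ks!i < N)"
    define js where "js = concat (map (digits n \<kappa>) ks)"
    have ljs: "length js = d" unfolding js_def len_concat_digits using ks hd by simp
    have "\<forall>x\<in>set js. x < n" unfolding js_def using assms(2) by (auto simp: digits_def)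
    then have jst: "js \<in> tidx (replicate d n)" using ljs by (auto simp: tidx_def dest!: nth_mem)
    have "reshape n \<kappa> X ks = c * (\<Prod>j<d. (vs!j) (js!j))"
      using Xeq jst by (simp add: reshape_def js_def)
    also have "(\<Prod>j<d. (vs!j) (js!j)) = ev vs js" using ljs lv by (simp add: ev_prod)
    also have "\<dots> = prod_list (map (\<lambda>(g,k). ev g (digits n \<kappa> k)) (zip gs ks))"
      unfolding js_def cg[symmetric] using ks lgs lg by (intro ev_concat) auto
    also have "\<dots> = (\<Prod>i<d'. ev (gs!i) (digits n \<kappa> (ks!i)))"
      using ks lgs by (simp add: prod_list_nth)
    also have "\<dots> = (\<Prod>i<d'. y i (ks!i))"
    proof (rule prod.cong[OF refl])
      fix i assume "i \<in> {..<d'}"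
      then have i: "i < d'" by simp
      show "ev (gs!i) (digits n \<kappa> (ks!i)) = y i (ks!i)"
        using kron_ev[OF assms(2), of "ks!i" "gs!i"] lgi[OF i] ks i by (simp add: y_def N_def)
    qed
    finally show "reshape n \<kappa> X ks = c * (\<Prod>i<d'. y i (ks!i))" .
  qed
  have outeq: "multi_op d' N A (reshape n \<kappa> X) js = c * (\<Prod>i<d'. M i (js!i))" if "length js = d'" for js
    using multi_op_sep[OF resh that, of A] by (simp add: M_def)
  have Fout: "fnorm2 (replicate d' m) (multi_op d' N A (reshape n \<kappa> X)) = c^2 * (\<Prod>i<d'. vnorm2 m (M i))"
  proof -
    have "fnorm2 (replicate d' m) (multi_op d' N A (reshape n \<kappa> X))
        = (\<Sum>js\<in>tidx (replicate d' m). c^2 * (\<Prod>i<length (replicate d' m). (M i (js!i))^2))"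
      unfolding fnorm2_def
      by (rule sum.cong[OF refl]) (auto simp: tidx_def outeq power_mult_distrib prod_power_distrib)
    also have "\<dots> = c^2 * (\<Prod>i<d'. vnorm2 m (M i))"
      using sum_tidx_prod[where dims="replicate d' m" and g="\<lambda>i k. (M i k)^2"]
      by (simp add: sum_distrib_left[symmetric] vnorm2_def)
    finally show ?thesis .
  qed
  have FX: "fnorm2 (replicate d n) X = c^2"
  proof -
    have "fnorm2 (replicate d n) X
        = (\<Sum>js\<in>tidx (replicate d n). c^2 * (\<Prod>i<length (replicate d n). ((vs!i) (js!i))^2))"
      unfolding fnorm2_def
      by (rule sum.cong[OF refl]) (auto simp: Xeq power_mult_distrib prod_power_distrib)
    also have "\<dots> = c^2 * (\<Prod>i<d. vnorm2 n (vs!i))"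
      using sum_tidx_prod[where dims="replicate d n" and g="\<lambda>i k. ((vs!i) k)^2"]
      by (simp add: sum_distrib_left[symmetric] vnorm2_def)
    also have "\<dots> = c^2" using vunit lv by (simp add: nth_mem)
    finally show ?thesis .
  qed
  have dl1: "(1 + \<epsilon>) ^ d - 1 \<le> \<delta>" and dl2: "1 - (1 - \<epsilon>) ^ d \<le> \<delta>"
    unfolding assms(7) by (rule max.cobounded1, rule max.cobounded2)
  have eps0: "\<epsilon> \<ge> 0" using RIPy[of 0] d'1 by auto
  have eps1: "\<epsilon> < 1"
  proof (rule ccontr)
    assume "\<not> \<epsilon> < 1"
    then have "(1 + \<epsilon>) ^ 1 \<le> (1 + \<epsilon>) ^ d" using assms(1) eps0
      by (intro power_increasing) auto
    then show False using dl1 assms(8) \<open>\<not> \<epsilon> < 1\<close> by simp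
  qed
  define L where "L = (\<Prod>i<d'. vnorm2 m (M i))"
  have Llow: "(1 - \<epsilon>) ^ d' \<le> L"
  proof -
    have "(\<Prod>i<d'. (1 - \<epsilon>)) \<le> L" unfolding L_def
      using RIPy eps1 by (intro prod_mono) auto
    then show ?thesis by simp
  qed
  have Lup: "L \<le> (1 + \<epsilon>) ^ d'"
  proof -
    have "L \<le> (\<Prod>i<d'. (1 + \<epsilon>))" unfolding L_def
      using RIPy eps1 by (intro prod_mono) (auto simp: vnorm2_def sum_nonneg)
    then show ?thesis by simp
  qed
  have a: "1 - \<delta> \<le> (1 - \<epsilon>) ^ d'"
  proof -
    have "(1 - \<epsilon>) ^ d \<le> (1 - \<epsilon>) ^ d'" using d'd eps0 eps1 by (intro power_decreasing) auto
    then show ?thesis using dl2 by linarith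
  qed
  have b: "(1 + \<epsilon>) ^ d' \<le> 1 + \<delta>"
  proof -
    have "(1 + \<epsilon>) ^ d' \<le> (1 + \<epsilon>) ^ d" using d'd eps0 by (intro power_increasing) auto
    then show ?thesis using dl1 by linarith
  qed
  have c2: "c^2 \<ge> 0" by simp
  have "(1 - \<delta>) * c^2 \<le> c^2 * L" "c^2 * L \<le> (1 + \<delta>) * c^2"
    using mult_right_mono[OF order.trans[OF a Llow] c2] mult_right_mono[OF order.trans[OF Lup b] c2]
    by (simp_all only: mult.commute)
  then show ?thesis unfolding FX Fout[unfolded N_def] L_def[symmetric] by (rule conjI)
qed

end
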